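(* Let $m\in\{1,2\}$, $\gamma\in(1,2]$ and $z\in(z_g,z_M]$. Then the continuation to the right, $C:[V_6,0)\to(0,\infty)$, of the local real-analytic solution through $P_6$ satisfies $C(V)<\sqrt{-V}$ for all $V\in[V_6,0)$; in particular $C(V)\to0$ as $V\to0^-$.
   Context: Fix $m\in\{1,2\}$. For $z>0$ put $\lambda=1+m\gamma z$, $a_1=1+\frac{m(\gamma-1)}{2}$, $a_2=\frac{m(\gamma-1)+mz\gamma(\gamma-3)}{2}$, $a_3=\frac{mz\gamma(\gamma-1)}{2}$, $G(V,C;\gamma,z)=C^2[(m+1)V+2mz]-V(1+V)(\lambda+V)$, $F(V,C;\gamma,z)=C\{C^2[1+\frac{mz}{1+V}]-a_1(1+V)^2+a_2(1+V)-a_3\}$; ODE $\frac{dC}{dV}=\frac FG$. $z_M=(\sqrt\gamma+\sqrt2)^{-2}$; $w(z)=\sqrt{1-2(\gamma+2)z+(\gamma-2)^2z^2}$, $V_6=\frac{-1+(\gamma-2)z-w}{2}$, $C_6=1+V_6$, $P_6=(V_6,C_6)$. The local solution is the real-analytic solution near $V_6$ with $C(V_6)=C_6$ and $C'(V_6)$ equal to the unique negative root of $-G_Cc^2+(F_C-G_V)c+F_V=0$ (partials at $P_6$); it extends as a positive decreasing solution on $[V_6,0)$. $z_g$: value of $z$ with $V_6(z)=\frac{-2(1+m\gamma z)}{\gamma+1+m(\gamma-1)}$ (explicitly $\frac{\sqrt{\gamma^2+(\gamma-1)^2}-\gamma}{\gamma(\gamma-1)}$ for $m=1$, $\frac{\sqrt{(2\gamma^2-\gamma+1)^2+2\gamma(\gamma-1)[4\gamma(\gamma-1)+8/3]}-(2\gamma^2-\gamma+1)}{\gamma[4\gamma(\gamma-1)+8/3]}$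 for $m=2$). *)

theory Defs
  imports "HOL-Analysis.Analysis"
begin

definition lam :: "real \<Rightarrow> real \<Rightarrow> real \<Rightarrow> real" where
  "lam m \<gamma> z = 1 + m * \<gamma> * z"
definition a1 :: "real \<Rightarrow> real \<Rightarrow> real" where
  "a1 m \<gamma> = 1 + m * (\<gamma> - 1) / 2"
definition a2 :: "real \<Rightarrow> real \<Rightarrow> real \<Rightarrow> real" where
  "a2 m \<gamma> z = (m * (\<gamma> - 1) + m * z * \<gamma> * (\<gamma> - 3)) / 2"
definition a3 :: "real \<Rightarrow> real \<Rightarrow> real \<Rightarrow> real" where
  "a3 m \<gamma> z = m * z * \<gamma> * (\<gamma> - 1) / 2"

definition GG :: "real \<Rightarrow> real \<Rightarrow> real \<Rightarrow> real \<Rightarrow> real \<Rightarrow> real" where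
  "GG m \<gamma> z V C = C^2 * ((m + 1) * V + 2 * m * z) - V * (1 + V) * (lam m \<gamma> z + V)"
definition FF :: "real \<Rightarrow> real \<Rightarrow> real \<Rightarrow> real \<Rightarrow> real \<Rightarrow> real" where
  "FF m \<gamma> z V C = C * (C^2 * (1 + m * z / (1 + V)) - a1 m \<gamma> * (1 + V)^2
      + a2 m \<gamma> z * (1 + V) - a3 m \<gamma> z)"

definition zM :: "real \<Rightarrow> real" where
  "zM \<gamma> = 1 / (sqrt \<gamma> + sqrt 2)^2"
definition ww :: "real \<Rightarrow> real \<Rightarrow> real" where
  "ww \<gamma> z = sqrt (1 - 2 * (\<gamma> + 2) * z + (\<gamma> - 2)^2 * z^2)"
definition V6 :: "real \<Rightarrow> real \<Rightarrow> real" where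
  "V6 \<gamma> z = (-1 + (\<gamma> - 2) * z - ww \<gamma> z) / 2"
definition C6 :: "real \<Rightarrow> real \<Rightarrow> real" where
  "C6 \<gamma> z = 1 + V6 \<gamma> z"

definition zg :: "real \<Rightarrow> real \<Rightarrow> real" where
  "zg m \<gamma> = (if m = 1 then (sqrt (\<gamma>^2 + (\<gamma> - 1)^2) - \<gamma>) / (\<gamma> * (\<gamma> - 1))
     else (sqrt ((2*\<gamma>^2 - \<gamma> + 1)^2 + 2*\<gamma>*(\<gamma> - 1)*(4*\<gamma>*(\<gamma> - 1) + 8/3))
             - (2*\<gamma>^2 - \<gamma> + 1)) / (\<gamma> * (4*\<gamma>*(\<gamma> - 1) + 8/3)))"

definition GV6 where "GV6 m \<gamma> z = deriv (\<lambda>v. GG m \<gamma> z v (C6 \<gamma> z)) (V6 \<gamma> z)"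
definition GC6 where "GC6 m \<gamma> z = deriv (\<lambda>c. GG m \<gamma> z (V6 \<gamma> z) c) (C6 \<gamma> z)"
definition FV6 where "FV6 m \<gamma> z = deriv (\<lambda>v. FF m \<gamma> z v (C6 \<gamma> z)) (V6 \<gamma> z)"
definition FC6 where "FC6 m \<gamma> z = deriv (\<lambda>c. FF m \<gamma> z (V6 \<gamma> z) c) (C6 \<gamma> z)"

definition real_analytic_at :: "(real \<Rightarrow> real) \<Rightarrow> real \<Rightarrow> bool" where
  "real_analytic_at f x0 \<longleftrightarrow> (\<exists>r>0. \<exists>a::nat \<Rightarrow> real.
      \<forall>x. \<bar>x - x0\<bar> < r \<longrightarrow> (\<lambda>n. a n * (x - x0)^n) sums f x)"

end

theory Submission
  imports Defs
begin


lemma relR: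
  fixes g z q :: real
  assumes R: "q^2 - (1+(g-2)*z)*q + g*z = 0"
  shows "q*(1-q) = z*(g*(1-q)+2*q)"
  using R by (simp add: algebra_simps power2_eq_square)

lemma s_ge_gz:
  fixes g z q :: real
  assumes R: "q^2 - (1+(g-2)*z)*q + g*z = 0" and "0 < q" "q < 1" "0 < z"
  shows "g*z \<le> q"
proof -
  have "q*(1-q) = z*(g*(1-q)+2*q)" using relR[OF R] .
  hence "(q - g*z)*(1-q) = 2*z*q" by (simp add: algebra_simps)
  hence "(q - g*z)*(1-q) \<ge> 0" using assms by simp
  thus ?thesis using \<open>q<1\<close> by (simp add: zero_le_mult_iff)
qed

lemma gz_le:
  fixes g z q :: real
  assumes R: "q^2 - (1+(g-2)*z)*q + g*z = 0" and "0 < q" "0 < z" "g \<le> 2"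
  shows "g*z \<le> q*(1-q)"
proof -
  have "g*z = q*(1-q) - q*(2-g)*z" using R by (simp add: algebra_simps power2_eq_square)
  moreover have "q*(2-g)*z \<ge> 0" using assms by simp
  ultimately show ?thesis by linarith
qed

lemma s2_le_2z:
  fixes g z q :: real
  assumes R: "q^2 - (1+(g-2)*z)*q + g*z = 0" and "0 < q" "q \<le> 1/2" "0 < z" "1 < g" "g \<le> 2"
  shows "q^2 \<le> 2*z"
proof -
  have "q*(1-q) = z*(g*(1-q)+2*q)" using relR[OF R] .
  moreover have "g*(1-q) \<le> 2*(1-q)" using assms by (intro mult_right_mono) auto
  hence "z*(g*(1-q)+2*q) \<le> z*2" using assms by (intro mult_left_mono) auto
  moreover have "q^2 \<le> q*(1-q)" using assms by (simp add: power2_eq_square mult_left_mono)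
  ultimately show ?thesis by linarith
qed

lemma g1_pos:
  fixes m g z q x :: real
  assumes R: "q^2 - (1+(g-2)*z)*q + g*z = 0" and "0 < q" "q \<le> 1/2" "0 < z" "1 < g" "g \<le> 2"
    and "1 \<le> m" and "q < x" "x \<le> 1 - q^2"
  shows "m*q^2 - x^2 - x*q + (1 - m*g*z)*(x+q) + m*g*z > 0"
proof -
  have e: "m*q^2 - x^2 - x*q + (1 - m*g*z)*(x+q) + m*g*z = m*q^2 + (x+q)*(1-x) + m*(g*z)*(1-x-q)"
    by (simp add: algebra_simps power2_eq_square)
  have gz: "g*z \<le> q*(1-q)" using gz_le[OF R] assms by simp
  have gz0: "0 \<le> g*z" using assms by simp
  have a: "1-x-q \<ge> -(q*(1-q))" using assms by (simp add: power2_eq_square algebra_simps)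
  have "(g*z)*(1-x-q) \<ge> -((g*z)*(q*(1-q)))" using mult_left_mono[OF a gz0] by simp
  moreover have "(g*z)*(q*(1-q)) \<le> (q*(1-q))*(q*(1-q))" using gz assms
    by (intro mult_right_mono) (auto simp: mult_nonneg_nonneg)
  ultimately have b: "(g*z)*(1-x-q) \<ge> -((q*(1-q))*(q*(1-q)))" by linarith
  have c: "(q*(1-q))*(q*(1-q)) < q^2"
  proof -
    have "(1-q)*(1-q) < 1" using assms by (simp add: algebra_simps)
    hence "q^2*((1-q)*(1-q)) < q^2*1" using assms by (intro mult_strict_left_mono) auto
    thus ?thesis by (simp add: power2_eq_square algebra_simps)
  qed
  have "m*((g*z)*(1-x-q)) \<ge> m*(-((q*(1-q))*(q*(1-q))))" using b assms by (intro mult_left_mono) auto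
  moreover have "m*(q*(1-q))*(q*(1-q)) < m*q^2" using c assms by simp
  moreover have "(x+q)*(1-x) \<ge> 0" using assms by (intro mult_nonneg_nonneg) (auto, smt (verit) zero_le_square power2_eq_square)
  ultimately show ?thesis unfolding e by (simp add: algebra_simps)
qed

lemma k1_neg:
  fixes m g z q x :: real
  assumes R: "q^2 - (1+(g-2)*z)*q + g*z = 0" and "0 < q" "q \<le> 1/2" "0 < z" "1 < g" "g \<le> 2"
    and hm: "m = 1 \<or> m = 2" and hzg: "g*z*(3+g) > g - 1" and "q \<le> x"
  shows "2*q^2 - (2+m*(g-1))*(x^2+x*q+q^2) + (m*(g-1) + m*z*g*(g-3))*(x+q) - m*z*g*(g-1) < 0"
proof -
  have rr: "q*(1-q) - z*(g*(1-q)+2*q) = 0" using relR[OF R] by simp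
  have e: "2*q^2 - (2+m*(g-1))*(x^2+x*q+q^2) + (m*(g-1) + m*z*g*(g-3))*(x+q) - m*z*g*(g-1)
     = -2*x*(x+q) - m*z*g*(3-g)*(x+q) + m*(g-1)*x*(1-x-q) + m*(g-1)*z*q*(2-g)
       + m*(g-1)*(q*(1-q) - z*(g*(1-q)+2*q))"
    by (simp add: algebra_simps power2_eq_square)
  have m0: "m > 0" using hm by auto
  have A: "m*(g-1)*z*q*(2-g) \<le> m*z*g*(3-g)*q"
  proof -
    have "(g-1)*(2-g) \<le> g*(3-g)" by (simp add: algebra_simps)
    hence "((g-1)*(2-g))*(m*z*q) \<le> (g*(3-g))*(m*z*q)" using assms m0
      by (intro mult_right_mono) auto
    thus ?thesis by (simp add: algebra_simps)
  qed
  have gzq: "g*z \<le> q" using s_ge_gz[OF R] assms by simp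
  have x0: "x > 0" using assms by simp
  have core: "m*(g-1)*(1-x-q) < 2*(x+q) + m*z*g*(3-g)"
  proof -
    have y: "x + q \<ge> 2*(g*z)" using gzq assms by simp
    have "m*(g-1) < g*z*(4+m+m*g)"
    proof (cases "m = 1")
      case True
      have "g*z*(3+g) \<le> g*z*(5+g)" using assms by (intro mult_left_mono) auto
      thus ?thesis using True hzg by simp
    next
      case False
      hence "m = 2" using hm by simp
      thus ?thesis using hzg by (simp add: algebra_simps)
    qed
    moreover have "(2+m*(g-1))*(2*(g*z)) \<le> (2+m*(g-1))*(x+q)"
      using y assms m0 by (intro mult_left_mono) auto
    ultimately show ?thesis by (simp add: algebra_simps)
  qed
  have B: "m*(g-1)*x*(1-x-q) < x*(2*(x+q) + m*z*g*(3-g))"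
  proof -
    have "x*(m*(g-1)*(1-x-q)) < x*(2*(x+q) + m*z*g*(3-g))"
      using core x0 by (intro mult_strict_left_mono) auto
    thus ?thesis by (simp add: algebra_simps)
  qed
  show ?thesis unfolding e rr using A B by (simp add: algebra_simps)
qed

lemma B_pos:
  fixes m g z u :: real
  assumes hm: "m = 1 \<or> m = 2" and "1 < g" "g \<le> 2" "0 < z" "z \<le> 1/5" "0 < u" "u \<le> 1/4" "u \<le> 2*z"
  shows "0 < 1 + m*g*z + 2*m*z - u*(m+3+m*g*z) + u^2"
proof -
  have m0: "m > 0" using hm by auto
  have a: "u*(m*g*z) \<le> 1*(m*g*z)" using assms m0 by (intro mult_right_mono) auto
  have b: "u^2 \<ge> 0" by simp
  have c: "1 + 2*m*z - u*(m+3) > 0"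
  proof (cases "z \<le> 1/16")
    case True
    have "u*(m+3) \<le> (2*z)*(m+3)" using assms m0 by (intro mult_right_mono) auto
    thus ?thesis using True hm by auto
  next
    case False
    have "u*(m+3) \<le> (1/4)*(m+3)" using assms m0 by (intro mult_right_mono) auto
    thus ?thesis using False hm by auto
  qed
  have "1 + m*g*z + 2*m*z - u*(m+3+m*g*z) + u^2 = (1 + 2*m*z - u*(m+3)) + (1*(m*g*z) - u*(m*g*z)) + u^2"
    by (simp add: algebra_simps)
  thus ?thesis using a b c by linarith
qed

lemma quad_aux:
  fixes u :: real
  assumes "0 \<le> u" "u \<le> 1/4" "1/4 \<le> t"
  shows "0 \<le> (u - 1/4)*(u - t)"
  using assms by (intro mult_nonpos_nonpos) auto

lemma Psos2:
  "\<lbrakk>1 \<le> (g::real); g \<le> 2; 0 \<le> u; u \<le> 1/4\<rbrakk> \<Longrightarrow>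
  -1 + 2*(69/400)*(2-g) + u*(2*g + 2*(69/400)*g*(3-g)) + u^2*(2 - 4*g + 2*(69/400)*g*(g-2)) + u^3*(2*g-1) < 0"
proof -
  assume a: "1 \<le> g" "g \<le> 2" "0 \<le> u" "u \<le> 1/4"
  define Z where "Z = (69/400::real)"
  define A where "A = -1 + 4*Z + 2*u^2 - u^3 + 2*Z*(9/4)*u"
  define B where "B = -2*Z + 2*u - 4*u^2 + 2*u^3"
  have gg: "g*(3-g) \<le> 9/4"
  proof -
    have "0 \<le> (g - 3/2)^2" by simp
    thus ?thesis by (simp add: power2_eq_square algebra_simps)
  qed
  have d1: "2*Z*u*(g*(3-g) - 9/4) \<le> 0" using gg a by (simp add: Z_def mult_nonneg_nonpos)
  have d2: "2*Z*g*(g-2)*u^2 \<le> 0" using a by (simp add: Z_def mult_nonneg_nonpos mult_nonpos_nonneg)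
  have e: "-1 + 2*Z*(2-g) + u*(2*g + 2*Z*g*(3-g)) + u^2*(2 - 4*g + 2*Z*g*(g-2)) + u^3*(2*g-1)
     = (2-g)*(A+B) + (g-1)*(A+2*B) + 2*Z*u*(g*(3-g) - 9/4) + 2*Z*g*(g-2)*u^2"
    by (simp add: A_def B_def algebra_simps power2_eq_square power3_eq_cube, simp add: field_simps)
  have u3: "u^3 \<le> 1/64"
  proof -
    have "u^3 \<le> (1/4)^3" using a by (intro power_mono) auto
    also have "(1/4::real)^3 = 1/64" by (simp add: power3_eq_cube)
    finally show ?thesis .
  qed
  have u30: "u^3 \<ge> 0" using a by simp
  have q1: "0 \<le> (u - 1/4)*(u - 3/4)" using quad_aux[of u "3/4"] a by simp
  have q2: "0 \<le> (u - 1/4)*(u - 5/12)" using quad_aux[of u "5/12"] a by simp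
  have AB1: "A + B < 0"
  proof -
    have "A + B = -1 + 2*Z + 2*Z*(9/4)*u + 2*u - 2*u^2 + u^3" by (simp add: A_def B_def)
    moreover have "2*u - 2*u^2 \<le> 3/8"
      using q1 by (simp add: power2_eq_square algebra_simps field_simps)
    ultimately show ?thesis using u3 a by (simp add: Z_def)
  qed
  have AB2: "A + 2*B < 0"
  proof -
    have "A + 2*B = -1 + 2*Z*(9/4)*u + 4*u - 6*u^2 + 3*u^3" by (simp add: A_def B_def)
    moreover have "4*u - 6*u^2 \<le> 5/8"
      using q2 by (simp add: power2_eq_square algebra_simps field_simps)
    ultimately show ?thesis using u3 a by (simp add: Z_def)
  qed
  have "(2-g)*(A+B) \<le> 0" using AB1 a by (simp add: mult_nonneg_nonpos)
  moreover have "(g-1)*(A+2*B) \<le> 0" using AB2 a by (simp add: mult_nonneg_nonpos)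
  moreover have "(2-g)*(A+B) + (g-1)*(A+2*B) < 0"
  proof (cases "g = 2")
    case True thus ?thesis using AB2 by simp
  next
    case False
    hence "(2-g)*(A+B) < 0" using AB1 a by (simp add: mult_pos_neg)
    thus ?thesis using calculation by simp
  qed
  ultimately show ?thesis using e d1 d2 unfolding Z_def by linarith
qed

lemma Psos1:
  "\<lbrakk>1 \<le> (g::real); g \<le> 2; 0 \<le> u; u \<le> 1/4\<rbrakk> \<Longrightarrow>
  -1 + (69/400)*(2-g) + u*(2+g + (69/400)*g*(3-g)) + u^2*(-1 - 2*g + (69/400)*g*(g-2)) + u^3*g < 0"
proof -
  assume a: "1 \<le> g" "g \<le> 2" "0 \<le> u" "u \<le> 1/4"
  define Z where "Z = (69/400::real)"
  define A where "A = -1 + 2*Z + 2*u - u^2 + Z*(9/4)*u"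
  define B where "B = -Z + u - 2*u^2 + u^3"
  have gg: "g*(3-g) \<le> 9/4"
  proof -
    have "0 \<le> (g - 3/2)^2" by simp
    thus ?thesis by (simp add: power2_eq_square algebra_simps)
  qed
  have d1: "Z*u*(g*(3-g) - 9/4) \<le> 0" using gg a by (simp add: Z_def mult_nonneg_nonpos)
  have d2: "Z*g*(g-2)*u^2 \<le> 0" using a by (simp add: Z_def mult_nonneg_nonpos mult_nonpos_nonneg)
  have e: "-1 + Z*(2-g) + u*(2+g + Z*g*(3-g)) + u^2*(-1 - 2*g + Z*g*(g-2)) + u^3*g
     = (2-g)*(A+B) + (g-1)*(A+2*B) + Z*u*(g*(3-g) - 9/4) + Z*g*(g-2)*u^2"
    by (simp add: A_def B_def algebra_simps power2_eq_square power3_eq_cube, simp add: field_simps)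
  have u3: "u^3 \<le> 1/64"
  proof -
    have "u^3 \<le> (1/4)^3" using a by (intro power_mono) auto
    also have "(1/4::real)^3 = 1/64" by (simp add: power3_eq_cube)
    finally show ?thesis .
  qed
  have u30: "u^3 \<ge> 0" using a by simp
  have q1: "0 \<le> (u - 1/4)*(u - 3/4)" using quad_aux[of u "3/4"] a by simp
  have q2: "0 \<le> (u - 1/4)*(u - 11/20)" using quad_aux[of u "11/20"] a by simp
  have AB1: "A + B < 0"
  proof -
    have "A + B = -1 + Z + Z*(9/4)*u + 3*u - 3*u^2 + u^3" by (simp add: A_def B_def)
    moreover have "3*u - 3*u^2 \<le> 9/16"
      using q1 by (simp add: power2_eq_square algebra_simps field_simps)
    ultimately show ?thesis using u3 a by (simp add: Z_def)
  qed
  have AB2: "A + 2*B < 0"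
  proof -
    have "A + 2*B = -1 + Z*(9/4)*u + 4*u - 5*u^2 + 2*u^3" by (simp add: A_def B_def)
    moreover have "4*u - 5*u^2 \<le> 11/16"
      using q2 by (simp add: power2_eq_square algebra_simps field_simps)
    ultimately show ?thesis using u3 a by (simp add: Z_def)
  qed
  have "(g-1)*(A+2*B) \<le> 0" using AB2 a by (simp add: mult_nonneg_nonpos)
  moreover have "(2-g)*(A+B) + (g-1)*(A+2*B) < 0"
  proof (cases "g = 2")
    case True thus ?thesis using AB2 by simp
  next
    case False
    hence "(2-g)*(A+B) < 0" using AB1 a by (simp add: mult_pos_neg)
    thus ?thesis using calculation by simp
  qed
  ultimately show ?thesis using e d1 d2 unfolding Z_def by linarith
qed

lemma P_neg:
  fixes m g z u :: real
  assumes hm: "m = 1 \<or> m = 2" and "1 < g" "g \<le> 2" "0 < z" "z \<le> 69/400" "0 < u" "u \<le> 1/4"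
  shows "-1 + m*z*(2-g) + u*(4-2*m+m*g+m*z*g*(3-g)) + u^2*(-4+3*m-2*m*g+m*z*g*(g-2))
     + u^3*(1+m*g-m) < 0"
proof -
  define Z where "Z = (69/400::real)"
  define cz where "cz = (2-g) + u*g*(3-g) + u^2*g*(g-2)"
  have e: "-1 + m*z*(2-g) + u*(4-2*m+m*g+m*z*g*(3-g)) + u^2*(-4+3*m-2*m*g+m*z*g*(g-2)) + u^3*(1+m*g-m)
     = (-1 + m*Z*(2-g) + u*(4-2*m+m*g+m*Z*g*(3-g)) + u^2*(-4+3*m-2*m*g+m*Z*g*(g-2)) + u^3*(1+m*g-m))
       - m*(Z - z)*cz"
    by (simp add: cz_def algebra_simps power2_eq_square)
  have cz0: "cz \<ge> 0"
  proof -
    have "u^2 \<le> (1/4)^2" using assms by (intro power_mono) auto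
    hence "u^2*g \<le> (1/16)*2" using assms by (intro mult_mono) (auto simp: power2_eq_square)
    hence "(2-g)*(1 - u^2*g) \<ge> 0" using assms by simp
    moreover have "u*g*(3-g) \<ge> 0" using assms by simp
    moreover have "cz = (2-g)*(1 - u^2*g) + u*g*(3-g)" by (simp add: cz_def algebra_simps)
    ultimately show ?thesis by simp
  qed
  have "m*(Z - z)*cz \<ge> 0" using cz0 hm assms by (intro mult_nonneg_nonneg) (auto simp: Z_def)
  moreover have "-1 + m*Z*(2-g) + u*(4-2*m+m*g+m*Z*g*(3-g)) + u^2*(-4+3*m-2*m*g+m*Z*g*(g-2)) + u^3*(1+m*g-m) < 0"
  proof (cases "m = 1")
    case True
    show ?thesis using Psos1[of g u] assms unfolding True Z_def by (simp add: algebra_simps)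
  next
    case False
    hence "m = 2" using hm by simp
    thus ?thesis using Psos2[of g u] assms unfolding Z_def by (simp add: algebra_simps)
  qed
  ultimately show ?thesis unfolding e by linarith
qed

lemma zM_facts:
  fixes g z :: real
  assumes "1 < g" "g \<le> 2" "z \<le> zM g"
  shows "z \<le> 69/400" "0 \<le> 1 - 2*(g+2)*z + (g-2)^2*z^2"
proof -
  define p where "p = sqrt g"
  define r where "r = sqrt (2::real)"
  have p2: "p^2 = g" using assms by (simp add: p_def)
  have r2: "r^2 = 2" by (simp add: r_def)
  have p1: "p \<ge> 1" using assms by (simp add: p_def)
  have r14: "r \<ge> 1.414" unfolding r_def by (rule real_le_rsqrt) (simp add: power2_eq_square)
  have pr: "(p+r)^2 \<ge> 400/69"
  proof -
    have "(2.414::real)^2 \<le> (p+r)^2" using p1 r14 by (intro power_mono) auto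
    thus ?thesis by (simp add: power2_eq_square)
  qed
  have zz: "z*(p+r)^2 \<le> 1"
  proof -
    have "z \<le> 1/(p+r)^2" using assms by (simp add: zM_def p_def r_def)
    moreover have "(p+r)^2 > 0" using pr by linarith
    ultimately show ?thesis by (simp add: le_divide_eq)
  qed
  show "z \<le> 69/400"
  proof (cases "z \<le> 0")
    case False
    have "z*(400/69) \<le> z*(p+r)^2" using pr False by (intro mult_left_mono) auto
    thus ?thesis using zz by simp
  qed simp
  have fac: "1 - 2*(g+2)*z + (g-2)^2*z^2 = (1 - (p+r)^2*z)*(1 - (p-r)^2*z)"
    by (simp add: p2[symmetric] r2[symmetric] power2_eq_square algebra_simps)
  have f1: "1 - (p+r)^2*z \<ge> 0" using zz by (simp add: algebra_simps)
  have f2: "1 - (p-r)^2*z \<ge> 0"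
  proof (cases "z \<le> 0")
    case True
    have "(p-r)^2*z \<le> 0" using True by (simp add: mult_nonneg_nonpos)
    thus ?thesis by linarith
  next
    case False
    have "(p-r)^2 \<le> (p+r)^2" using p1 r14 by (simp add: power2_eq_square algebra_simps)
    hence "z*(p-r)^2 \<le> z*(p+r)^2" using False by (intro mult_left_mono) auto
    thus ?thesis using zz by (simp add: algebra_simps)
  qed
  show "0 \<le> 1 - 2*(g+2)*z + (g-2)^2*z^2" unfolding fac using f1 f2 by simp
qed

lemma zg_facts:
  fixes m g z :: real
  assumes hm: "m = 1 \<or> m = 2" and "1 < g" "g \<le> 2" "zg m g < z"
  shows "g*z*(3+g) > g - 1"
proof -
  define e where "e = g - 1"
  have e0: "e > 0" "e \<le> 1" using assms by (auto simp: e_def)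
  have lb: "zg m g \<ge> e/(g*(3+g))"
  proof (cases "m = 1")
    case True
    define t where "t = e^2/(3+g)"
    have t0: "t \<ge> 0" using assms by (simp add: t_def)
    have tle: "t \<le> 3 - g"
    proof -
      have "e^2 \<le> 1" using e0 by (simp add: power_le_one)
      hence "t \<le> 1/(3+g)" using assms by (simp add: t_def divide_right_mono)
      also have "\<dots> \<le> 1" using assms by simp
      finally show ?thesis using assms by simp
    qed
    have "(g + t)^2 \<le> g^2 + e^2"
    proof -
      have "t*(2*g+t) \<le> t*(3+g)" using t0 tle by (intro mult_left_mono) auto
      also have "t*(3+g) = e^2" using assms by (simp add: t_def)
      finally show ?thesis by (simp add: power2_eq_square algebra_simps)
    qed
    hence sq: "g + t \<le> sqrt (g^2 + e^2)" by (rule real_le_rsqrt)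
    have "zg m g = (sqrt (g^2 + e^2) - g)/(g*e)" using True by (simp add: zg_def e_def)
    also have "\<dots> \<ge> t/(g*e)" using sq assms e0 by (intro divide_right_mono) auto
    finally have "zg m g \<ge> t/(g*e)" .
    moreover have "t/(g*e) = e/(g*(3+g))"
    proof -
      have "g \<noteq> 0" "3+g \<noteq> 0" "e \<noteq> 0" using e0 assms by auto
      moreover have "g*g + g*3 > 0" using assms by (simp add: add_pos_pos)
      moreover have "e*(g*g) + e*(g*3) > 0" using assms e0 by (simp add: add_pos_pos)
      ultimately show ?thesis by (simp add: t_def power2_eq_square field_simps)
    qed
    ultimately show ?thesis by simp
  next
    case False
    hence m2: "m = 2" using hm by simp
    define k where "k = 4*g*e + 8/3"
    define b where "b = 2*g^2 - g + 1"
    define t where "t = e*k/(3+g)"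
    have "0 < 4*g*e" using assms e0 by (intro mult_pos_pos) auto
    hence k0: "k > 0" unfolding k_def by linarith
    have t0: "t \<ge> 0" using assms e0 k0 by (simp add: t_def)
    have poly: "2*b*(3+g) + e*k \<le> 2*g*(3+g)^2"
    proof -
      have eq: "2*g*(3+g)^2 - (2*b*(3+g) + e*k) = -6*g^3 + 10*g^2 + (46/3)*g - 10/3"
        unfolding b_def k_def e_def by (simp add: power2_eq_square power3_eq_cube algebra_simps, simp add: field_simps)
      have "g^3 \<le> 2*g^2" using assms by (simp add: power2_eq_square power3_eq_cube mult_right_mono)
      moreover have "g^2 \<le> 2*g" using assms by (simp add: power2_eq_square mult_right_mono)
      ultimately show ?thesis using eq assms by linarith
    qed
    have tle: "2*b + t \<le> 2*g*(3+g)"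
    proof -
      have "(2*b + t)*(3+g) = 2*b*(3+g) + e*k" using assms by (simp add: t_def field_simps)
      also have "\<dots> \<le> (2*g*(3+g))*(3+g)" using poly by (simp add: power2_eq_square algebra_simps)
      finally show ?thesis using assms by (simp add: mult_le_cancel_right)
    qed
    have "(b + t)^2 \<le> b^2 + 2*g*e*k"
    proof -
      have "t*(2*b+t) \<le> t*(2*g*(3+g))" using t0 tle by (intro mult_left_mono) auto
      also have "t*(2*g*(3+g)) = 2*g*e*k" using assms by (simp add: t_def)
      finally show ?thesis by (simp add: power2_eq_square algebra_simps)
    qed
    hence sq: "b + t \<le> sqrt (b^2 + 2*g*e*k)" by (rule real_le_rsqrt)
    have "zg m g = (sqrt (b^2 + 2*g*e*k) - b)/(g*k)" using m2
      by (simp add: zg_def e_def b_def k_def algebra_simps)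
    also have "\<dots> \<ge> t/(g*k)" using sq assms k0 by (intro divide_right_mono) auto
    finally have "zg m g \<ge> t/(g*k)" .
    moreover have "t/(g*k) = e/(g*(3+g))"
    proof -
      have "g \<noteq> 0" "3+g \<noteq> 0" "k \<noteq> 0" using k0 assms by auto
      moreover have "g*g + g*3 > 0" using assms by (simp add: add_pos_pos)
      moreover have "g*(g*k) + g*(k*3) > 0" using assms k0 by (simp add: add_pos_pos)
      ultimately show ?thesis by (simp add: t_def field_simps)
    qed
    ultimately show ?thesis by simp
  qed
  hence "z > e/(g*(3+g))" using assms by simp
  moreover have "g*(3+g) > 0" using assms by simp
  ultimately have "z*(g*(3+g)) > e" by (simp add: divide_less_eq)
  thus ?thesis by (simp add: e_def algebra_simps)
qed

lemma q_facts:
  fixes g z :: real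
  assumes "1 < g" "g \<le> 2" "0 < z" "z \<le> 1/5" "0 \<le> 1 - 2*(g+2)*z + (g-2)^2*z^2"
  shows "(C6 g z)^2 - (1+(g-2)*z)*C6 g z + g*z = 0" "0 < C6 g z" "C6 g z \<le> 1/2"
    "V6 g z = C6 g z - 1"
proof -
  define w where "w = ww g z"
  have w2: "w^2 = 1 - 2*(g+2)*z + (g-2)^2*z^2" using assms by (simp add: w_def ww_def)
  have w0: "w \<ge> 0" using assms(5) by (simp add: w_def ww_def)
  have q: "C6 g z = (1 + (g-2)*z - w)/2" by (simp add: C6_def V6_def w_def field_simps)
  show R: "(C6 g z)^2 - (1+(g-2)*z)*C6 g z + g*z = 0"
    unfolding q using w2 by (simp add: power2_eq_square field_simps)
  have p: "1 + (g-2)*z > 0"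
  proof -
    have "(2-g)*z \<le> 1*(1/5)" using assms by (intro mult_mono) auto
    thus ?thesis by (simp add: algebra_simps)
  qed
  have "(g-2)*z \<le> 0" using assms by (simp add: mult_nonpos_nonneg)
  thus "C6 g z \<le> 1/2" unfolding q using w0 by simp
  have pq: "1 + (g-2)*z - C6 g z > 0" unfolding q using w0 p by (simp add: field_simps)
  have "C6 g z * (1 + (g-2)*z - C6 g z) = g*z" using R by (simp add: power2_eq_square algebra_simps)
  moreover have "g*z > 0" using assms by simp
  ultimately show "0 < C6 g z" using pq by (metis zero_less_mult_iff not_less_iff_gr_or_eq)
  show "V6 g z = C6 g z - 1" by (simp add: C6_def)
qed

lemma H_sign:
  fixes m g z q V :: real
  assumes hm: "m = 1 \<or> m = 2" and "1 < g" "g \<le> 2" "0 < z"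
    and R: "q^2 - (1+(g-2)*z)*q + g*z = 0" and "0 < q" "q \<le> 1/2" and hzg: "g*z*(3+g) > g - 1"
    and "q - 1 < V" "V \<le> -(q^2)"
  shows "GG m g z V q > 0" "FF m g z V q < 0"
proof -
  define x where "x = 1 + V"
  have xq: "q < x" "x \<le> 1 - q^2" using assms by (auto simp: x_def)
  have m1: "1 \<le> m" using hm by auto
  have eG: "GG m g z V q = (x-q)*(m*q^2 - x^2 - x*q + (1 - m*g*z)*(x+q) + m*g*z)
      + m*q*(q^2 - (1+(g-2)*z)*q + g*z)"
    unfolding GG_def lam_def x_def by (simp add: power2_eq_square algebra_simps)
  have "m*q^2 - x^2 - x*q + (1 - m*g*z)*(x+q) + m*g*z > 0"
    using g1_pos[OF R] assms xq m1 by simp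
  thus "GG m g z V q > 0" unfolding eG R using xq by simp
  have x0: "x > 0" using xq assms by simp
  have eF: "2*x*FF m g z V q = q*((x-q)*(2*q^2 - (2+m*(g-1))*(x^2+x*q+q^2) + (m*(g-1) + m*z*g*(g-3))*(x+q) - m*z*g*(g-1))
      - m*q*(g-1)*(q^2 - (1+(g-2)*z)*q + g*z))"
    using x0 unfolding FF_def a1_def a2_def a3_def x_def[symmetric]
    by (simp add: x_def power2_eq_square field_simps)
  have "2*q^2 - (2+m*(g-1))*(x^2+x*q+q^2) + (m*(g-1) + m*z*g*(g-3))*(x+q) - m*z*g*(g-1) < 0"
    using k1_neg[OF R] assms xq by simp
  hence "2*x*FF m g z V q < 0" unfolding eF R using xq assms by (simp add: mult_pos_neg)
  thus "FF m g z V q < 0" using x0 by (simp add: mult_less_0_iff)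
qed

lemma Cv_sign:
  fixes m g z q V :: real
  assumes hm: "m = 1 \<or> m = 2" and "1 < g" "g \<le> 2" "0 < z" "z \<le> 69/400"
    and R: "q^2 - (1+(g-2)*z)*q + g*z = 0" and "0 < q" "q \<le> 1/2"
    and "-(q^2) < V" "V < 0"
  shows "GG m g z V (sqrt (-V)) > 0"
    "FF m g z V (sqrt (-V)) / GG m g z V (sqrt (-V)) + 1/(2* sqrt (-V)) < 0"
proof -
  define u where "u = -V"
  define r where "r = sqrt (-V)"
  have u0: "0 < u" using assms by (simp add: u_def)
  have r2: "r^2 = u" using assms by (simp add: r_def u_def)
  have r0: "r > 0" using assms by (simp add: r_def)
  have q2: "q^2 \<le> 1/4"
  proof -
    have "q^2 \<le> (1/2)^2" using assms by (intro power_mono) auto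
    thus ?thesis by (simp add: power2_eq_square)
  qed
  have uq: "u < q^2" using assms by (simp add: u_def)
  have u14: "u \<le> 1/4" using uq q2 by simp
  have u2z: "u \<le> 2*z" using uq s2_le_2z[OF R] assms by simp
  define B where "B = 1 + m*g*z + 2*m*z - u*(m+3+m*g*z) + u^2"
  define P where "P = -1 + m*z*(2-g) + u*(4-2*m+m*g+m*z*g*(3-g)) + u^2*(-4+3*m-2*m*g+m*z*g*(g-2))
     + u^3*(1+m*g-m)"
  have B0: "B > 0" unfolding B_def using B_pos[of m g z u] assms u0 u14 u2z by simp
  have P0: "P < 0" unfolding P_def using P_neg[of m g z u] assms u0 u14 by simp
  have eG: "GG m g z V r = u*B"
    unfolding GG_def lam_def B_def using r2 by (simp add: u_def power2_eq_square algebra_simps)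
  show G0: "GG m g z V (sqrt (-V)) > 0" using eG B0 u0 by (simp add: r_def)
  define Y where "Y = u*(1 + m*z/(1-u)) - a1 m g*(1-u)^2 + a2 m g z*(1-u) - a3 m g z"
  have eF: "FF m g z V r = r*Y" unfolding FF_def Y_def using r2 by (simp add: u_def)
  have x0: "1 - u > 0" using u14 by simp
  have eN: "(1-u)*(2*u*Y + u*B) = u*P"
    using x0 unfolding Y_def B_def P_def a1_def a2_def a3_def
    by (simp add: power2_eq_square power3_eq_cube field_simps)
  have N: "2*u*Y + u*B < 0"
  proof -
    have "(1-u)*(2*u*Y + u*B) < 0" unfolding eN using u0 P0 by (simp add: mult_pos_neg)
    thus ?thesis using x0 by (simp add: mult_less_0_iff)
  qed
  have "FF m g z V r / GG m g z V r + 1/(2*r) = (2*u*Y + u*B)/(2*r*GG m g z V r)"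
    using r0 G0 unfolding eF eG using r2 u0 B0 by (simp add: field_simps power2_eq_square)
  also have "\<dots> < 0" using N r0 G0 by (simp add: divide_neg_pos r_def)
  finally show "FF m g z V (sqrt (-V)) / GG m g z V (sqrt (-V)) + 1/(2* sqrt (-V)) < 0"
    by (simp add: r_def)
qed



theorem mainTheorem17:
  fixes m \<gamma> z c :: real and C :: "real \<Rightarrow> real"
  assumes hm: "m = 1 \<or> m = 2"
    and h\<gamma>: "1 < \<gamma>" "\<gamma> \<le> 2"
    and hz: "zg m \<gamma> < z" "z \<le> zM \<gamma>"
    and hc: "c < 0"
      "- GC6 m \<gamma> z * c^2 + (FC6 m \<gamma> z - GV6 m \<gamma> z) * c + FV6 m \<gamma> z = 0"
    and hC_an: "real_analytic_at C (V6 \<gamma> z)"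
    and hC_init: "C (V6 \<gamma> z) = C6 \<gamma> z"
    and hC_der: "(C has_real_derivative c) (at (V6 \<gamma> z))"
    and hC_ode: "\<forall>V. V6 \<gamma> z < V \<and> V < 0 \<longrightarrow>
        GG m \<gamma> z V (C V) \<noteq> 0 \<and>
        (C has_real_derivative FF m \<gamma> z V (C V) / GG m \<gamma> z V (C V)) (at V)"
    and hC_pos: "\<forall>V. V6 \<gamma> z \<le> V \<and> V < 0 \<longrightarrow> C V > 0"
  shows "(\<forall>V. V6 \<gamma> z \<le> V \<and> V < 0 \<longrightarrow> C V < sqrt (- V)) \<and> (C \<longlongrightarrow> 0) (at_left 0)"
proof -
  define q where "q = C6 \<gamma> z"
  define v6 where "v6 = V6 \<gamma> z"
  have hzg: "\<gamma>*z*(3+\<gamma>) > \<gamma> - 1" using zg_facts[OF hm h\<gamma> hz(1)] .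
  have z0: "0 < z"
  proof (rule ccontr)
    assume "\<not> 0 < z"
    hence "\<gamma>*z*(3+\<gamma>) \<le> 0" using h\<gamma> by (simp add: mult_nonpos_nonneg mult_nonneg_nonpos)
    thus False using hzg h\<gamma> by simp
  qed
  have zb: "z \<le> 69/400" and D: "0 \<le> 1 - 2*(\<gamma>+2)*z + (\<gamma>-2)^2*z^2"
    using zM_facts[OF h\<gamma> hz(2)] by auto
  have z5: "z \<le> 1/5" using zb by simp
  note qf = q_facts[OF h\<gamma> z0 z5 D]
  have R: "q^2 - (1+(\<gamma>-2)*z)*q + \<gamma>*z = 0" using qf(1) by (simp add: q_def)
  have q0: "0 < q" and q12: "q \<le> 1/2" using qf by (auto simp: q_def)
  have v6q: "v6 = q - 1" using qf by (simp add: q_def v6_def)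
  have q2: "q^2 \<le> 1/4"
  proof -
    have "q^2 \<le> (1/2)^2" using q0 q12 by (intro power_mono) auto
    thus ?thesis by (simp add: power2_eq_square)
  qed
  have corner: "v6 < -(q^2)" using v6q q2 q12 by simp
  have Cv6: "C v6 = q" using hC_init by (simp add: v6_def q_def)
  have sqrt_gt: "\<And>V. V < -(q^2) \<Longrightarrow> q < sqrt (-V)"
  proof -
    fix V :: real assume "V < -(q^2)"
    hence "q^2 < -V" by simp
    thus "q < sqrt (-V)" by (rule real_less_rsqrt)
  qed
  have sqrt_ge: "\<And>V. V \<le> -(q^2) \<Longrightarrow> q \<le> sqrt (-V)"
  proof -
    fix V :: real assume "V \<le> -(q^2)"
    hence "q^2 \<le> -V" by simp
    thus "q \<le> sqrt (-V)" by (rule real_le_rsqrt)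
  qed
  have sqrt_lt: "\<And>V. -(q^2) < V \<Longrightarrow> sqrt (-V) < q"
  proof -
    fix V :: real assume "-(q^2) < V"
    hence "-V < q^2" by simp
    hence "sqrt (-V) < sqrt (q^2)" by (rule real_sqrt_less_mono)
    thus "sqrt (-V) < q" using q0 by simp
  qed
  define b where "b = (\<lambda>V::real. min q (sqrt (-V)))"
  have contb: "continuous_on S b" for S unfolding b_def by (intro continuous_intros)
  have ode: "\<And>V. v6 < V \<Longrightarrow> V < 0 \<Longrightarrow>
      (C has_real_derivative FF m \<gamma> z V (C V) / GG m \<gamma> z V (C V)) (at V)"
    using hC_ode by (simp add: v6_def)
  have contC: "\<And>V. v6 < V \<Longrightarrow> V < 0 \<Longrightarrow> isCont C V"
    using ode DERIV_isCont by blast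
  have claim: "\<forall>V. v6 < V \<and> V < 0 \<longrightarrow> C V < b V"
  proof (rule ccontr)
    assume "\<not> (\<forall>V. v6 < V \<and> V < 0 \<longrightarrow> C V < b V)"
    then obtain Vb where Vb: "v6 < Vb" "Vb < 0" "b Vb \<le> C Vb" by (auto simp: not_less)
    obtain d where d: "d > 0" "\<And>h. h > 0 \<Longrightarrow> h < d \<Longrightarrow> C (v6 + h) < C v6"
      using DERIV_neg_dec_right[OF hC_der[folded v6_def] hc(1)] by blast
    define a where "a = v6 + min (d/2) ((-(q^2) - v6)/2)"
    have mn: "min (d/2) ((-(q^2) - v6)/2) \<le> d/2" "min (d/2) ((-(q^2) - v6)/2) \<le> (-(q^2) - v6)/2"
      "min (d/2) ((-(q^2) - v6)/2) > 0" using d corner by (simp_all add: min_def)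
    have a: "v6 < a" "a < v6 + d" "a < -(q^2)"
    proof -
      show "v6 < a" using mn(3) by (simp add: a_def)
      show "a < v6 + d" using mn(1) d(1) by (simp add: a_def)
      have "a \<le> v6 + (-(q^2) - v6)/2" using mn(2) by (simp add: a_def)
      moreover have "v6 + (-(q^2) - v6)/2 < -(q^2)" using corner by (simp add: field_simps)
      ultimately show "a < -(q^2)" by (rule le_less_trans)
    qed
    have Ca: "C a < q" using d(2)[of "a - v6"] a Cv6 by simp
    have ba: "b a = q" using sqrt_ge[of a] a by (simp add: b_def)
    have aVb: "a < Vb"
    proof (rule ccontr)
      assume "\<not> a < Vb"
      hence "Vb \<le> a" by simp
      hence "C Vb < q" using d(2)[of "Vb - v6"] a Vb Cv6 by simp
      moreover have "b Vb = q" using sqrt_ge[of Vb] \<open>Vb \<le> a\<close> a by (simp add: b_def)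
      ultimately show False using Vb by simp
    qed
    have contCab: "continuous_on {a..Vb} C"
      using contC a Vb corner by (intro continuous_at_imp_continuous_on) auto
    define S where "S = {V \<in> {a..Vb}. b V - C V \<le> 0}"
    have "closed S" unfolding S_def
      by (rule continuous_on_closed_Collect_le[OF continuous_on_diff[OF contb contCab] continuous_on_const closed_atLeastAtMost])
    moreover have "bounded S"
    proof (rule bounded_subset[of "{a..Vb}"])
      show "bounded {a..Vb}" by simp
      show "S \<subseteq> {a..Vb}" unfolding S_def by blast
    qed
    ultimately have cS: "compact S" by (simp add: compact_eq_bounded_closed)
    have "Vb \<in> S" using Vb aVb by (simp add: S_def)
    hence neS: "S \<noteq> {}" by blast
    obtain V1 where V1S: "V1 \<in> S" and V1min': "\<forall>y\<in>S. V1 \<le> y"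
      using compact_attains_inf[OF cS neS] by blast
    have V1min: "\<And>y. y \<in> S \<Longrightarrow> V1 \<le> y" using V1min' by blast
    have V1: "a \<le> V1" "V1 \<le> Vb" "b V1 \<le> C V1" using V1S unfolding S_def by simp_all
    have left: "\<And>V. a \<le> V \<Longrightarrow> V < V1 \<Longrightarrow> C V < b V"
    proof -
      fix V assume "a \<le> V" "V < V1"
      show "C V < b V"
      proof (rule ccontr)
        assume "\<not> C V < b V"
        hence "V \<in> S" using \<open>a \<le> V\<close> \<open>V < V1\<close> V1 unfolding S_def by simp
        hence "V1 \<le> V" by (rule V1min)
        thus False using \<open>V < V1\<close> by simp
      qed
    qed
    have "a \<noteq> V1"
    proof
      assume "a = V1"
      hence "b a \<le> C a" using V1(3) by simp
      thus False using Ca ba by simp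
    qed
    hence aV1: "a < V1" using V1(1) by simp
    have V1r: "v6 < V1" "V1 < 0" using a(1) aV1 V1(2) Vb(2) by simp_all
    have eqb: "C V1 = b V1"
    proof (rule ccontr)
      assume "C V1 \<noteq> b V1"
      hence neg: "b V1 - C V1 < 0" using V1 by simp
      have cC1: "continuous_on {a..V1} C"
      proof (rule continuous_at_imp_continuous_on, intro ballI)
        fix x assume "x \<in> {a..V1}"
        hence "v6 < x" "x < 0" using a(1) V1r(2) by auto
        thus "isCont C x" by (rule contC)
      qed
      have contH: "continuous_on {a..V1} (\<lambda>V. b V - C V)"
        by (rule continuous_on_diff[OF contb cC1])
      have h1: "(\<lambda>V. b V - C V) V1 \<le> 0" using neg by simp
      have h2: "0 \<le> (\<lambda>V. b V - C V) a" using Ca ba by simp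
      have "\<exists>x. a \<le> x \<and> x \<le> V1 \<and> b x - C x = 0"
        using IVT2'[of "\<lambda>V. b V - C V" V1 0 a, OF h1 h2 _ contH] aV1 by simp
      then obtain x where x: "a \<le> x" "x \<le> V1" "b x - C x = 0" by blast
      have "x \<in> S" using x V1 unfolding S_def by simp
      hence "V1 \<le> x" by (rule V1min)
      hence "x = V1" using x by simp
      thus False using x neg by simp
    qed
    have der: "(C has_real_derivative FF m \<gamma> z V1 (C V1) / GG m \<gamma> z V1 (C V1)) (at V1)"
      using ode V1r by simp
    show False
    proof (cases "V1 \<le> -(q^2)")
      case True
      have bq: "b V1 = q" using sqrt_ge[OF True] by (simp add: b_def)
      have CV1: "C V1 = q" using eqb bq by simp
      have sg: "GG m \<gamma> z V1 q > 0" "FF m \<gamma> z V1 q < 0"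
        using H_sign[OF hm h\<gamma> z0 R q0 q12 hzg, of V1] V1r True v6q by auto
      have "FF m \<gamma> z V1 (C V1) / GG m \<gamma> z V1 (C V1) < 0" using sg CV1 by (simp add: divide_neg_pos)
      then obtain d' where d': "d' > 0" "\<And>h. h > 0 \<Longrightarrow> h < d' \<Longrightarrow> C V1 < C (V1 - h)"
        using DERIV_neg_dec_left[OF der] by blast
      obtain h where h0: "0 < h" "h < d'" "h < V1 - a"
        using field_lbound_gt_zero[of d' "V1 - a"] d'(1) aV1 by auto
      have h: "h > 0" "h < d'" "a \<le> V1 - h" "V1 - h < V1" using h0 by simp_all
      have "C (V1 - h) < b (V1 - h)" using left h by simp
      moreover have "b (V1 - h) \<le> q" by (simp add: b_def)
      ultimately show False using d'(2)[OF h(1) h(2)] CV1 by simp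
    next
      case False
      hence Fq: "-(q^2) < V1" by simp
      have bs: "b V1 = sqrt (-V1)" using sqrt_lt[OF Fq] by (simp add: b_def)
      have CV1: "C V1 = sqrt (-V1)" using eqb bs by simp
      have sg: "FF m \<gamma> z V1 (sqrt (-V1)) / GG m \<gamma> z V1 (sqrt (-V1)) + 1/(2 * sqrt (-V1)) < 0"
        using Cv_sign[OF hm h\<gamma> z0 zb R q0 q12 Fq V1r(2)] by simp
      have dsq: "((\<lambda>V. sqrt (-V)) has_real_derivative (inverse (sqrt (- V1)) / 2 * (- 1))) (at V1)"
        using V1r by (intro DERIV_chain2[OF DERIV_real_sqrt DERIV_minus[OF DERIV_ident]]) simp
      have dk: "((\<lambda>V. C V - sqrt (-V)) has_real_derivative
          (FF m \<gamma> z V1 (C V1) / GG m \<gamma> z V1 (C V1) - inverse (sqrt (- V1)) / 2 * (- 1))) (at V1)"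
        by (rule DERIV_diff[OF der dsq])
      have "FF m \<gamma> z V1 (C V1) / GG m \<gamma> z V1 (C V1) - inverse (sqrt (- V1)) / 2 * (- 1) < 0"
        using sg CV1 by (simp add: inverse_eq_divide)
      then obtain d' where d': "d' > 0"
        "\<And>h. h > 0 \<Longrightarrow> h < d' \<Longrightarrow> C V1 - sqrt (-V1) < C (V1 - h) - sqrt (-(V1 - h))"
        using DERIV_neg_dec_left[OF dk] by blast
      obtain h' where h0': "0 < h'" "h' < d'" "h' < V1 - a"
        using field_lbound_gt_zero[of d' "V1 - a"] d'(1) aV1 by auto
      obtain h where h0: "0 < h" "h < h'" "h < V1 + q^2"
        using field_lbound_gt_zero[of h' "V1 + q^2"] h0'(1) Fq by auto
      have h: "h > 0" "h < d'" "a \<le> V1 - h" "V1 - h < V1" "-(q^2) < V1 - h"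
        using h0 h0' by simp_all
      have "C (V1 - h) < b (V1 - h)" using left h by simp
      moreover have "b (V1 - h) = sqrt (-(V1 - h))" using sqrt_lt[OF h(5)] by (simp add: b_def)
      ultimately show False using d'(2)[OF h(1) h(2)] CV1 by simp
    qed
  qed
  have part1: "\<forall>V. V6 \<gamma> z \<le> V \<and> V < 0 \<longrightarrow> C V < sqrt (- V)"
  proof (intro allI impI)
    fix V assume V: "V6 \<gamma> z \<le> V \<and> V < 0"
    show "C V < sqrt (-V)"
    proof (cases "V = v6")
      case True
      thus ?thesis using Cv6 sqrt_gt[OF corner] by simp
    next
      case False
      hence "v6 < V" using V by (simp add: v6_def)
      hence "C V < b V" using claim V by simp
      thus ?thesis by (simp add: b_def)
    qed
  qed
  have ev: "eventually (\<lambda>V. V \<in> {v6<..<0}) (at_left (0::real))"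
    using corner q0 by (intro eventually_at_left_real) (simp add: power2_eq_square, smt (verit) q0 mult_pos_pos)
  have lim0: "((\<lambda>V. sqrt (-V)) \<longlongrightarrow> 0) (at_left (0::real))"
  proof -
    have "((\<lambda>V. sqrt (-V)) \<longlongrightarrow> sqrt (- 0)) (at_left (0::real))" by (intro tendsto_intros)
    thus ?thesis by simp
  qed
  have "(C \<longlongrightarrow> 0) (at_left 0)"
  proof (rule tendsto_sandwich[OF _ _ tendsto_const lim0])
    show "eventually (\<lambda>V. 0 \<le> C V) (at_left 0)"
      using ev by eventually_elim (use hC_pos in \<open>auto simp: v6_def less_imp_le\<close>)
    show "eventually (\<lambda>V. C V \<le> sqrt (-V)) (at_left 0)"
      using ev by eventually_elim (use part1 in \<open>auto simp: v6_def less_imp_le\<close>)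
  qed
  with part1 show ?thesis by blast
qed

end
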